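(* Let $\mathbb{X}$ be a reflexive real Banach space and $\mathbb{Y}$ a smooth real Banach space (both of dimension greater than $1$). Let $T\in\mathbb{K}(\mathbb{X},\mathbb{Y})$ with $\|T\|=1$. Suppose that for every $\epsilon>0$, $T$ admits a uniform $\epsilon$-BPB approximation $A_\epsilon\in\mathbb{K}(\mathbb{X},\mathbb{Y})$ with $A_\epsilon\neq T$ which is a smooth point of $\mathbb{K}(\mathbb{X},\mathbb{Y})$. Then $T$ is a smooth point of $\mathbb{K}(\mathbb{X},\mathbb{Y})$.
   Context: $\mathbb{K}(\mathbb{X},\mathbb{Y})$ (resp. $\mathbb{L}(\mathbb{X},\mathbb{Y})$) denotes the compact (resp. bounded) linear operators with the operator norm; $S_{\mathbb{X}}$ is the unit sphere. A nonzero element $x$ of a Banach space $\mathbb{Z}$ is a smooth point if there is a unique $f\in\mathbb{Z}^*$ with $\|f\|=1$ and $f(x)=\|x\|$; $\mathbb{Y}$ is smooth if all its nonzero points are smooth. For $T$ with $\|T\|=1$ and fixed $\epsilon>0$, an operator $A\in\mathbb{L}(\mathbb{X},\mathbb{Y})$ with $\|A\|=1$ is a uniform $\epsilon$-BPB approximation of $T$ if there exists $\delta(\epsilon)>0$ such that whenever $x_0\in S_{\mathbb{X}}$ satisfies $\|Tx_0\|>1-\delta(\epsilon)$, there exists $u_0\in S_{\mathbb{X}}$ with $\|Au_0\|=1$, $\|u_0-x_0\|<\epsilon$ and $\|A-T\|<\epsilon$. *)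

theory Defs
  imports "HOL-Analysis.Analysis"
begin

definition dim_gt_one :: "'a::real_vector itself \<Rightarrow> bool" where
  "dim_gt_one _ \<longleftrightarrow> \<not> (\<exists>v::'a. \<forall>x::'a. \<exists>c::real. x = c *\<^sub>R v)"

definition reflexive_space :: "'a::real_normed_vector itself \<Rightarrow> bool" where
  "reflexive_space _ \<longleftrightarrow>
     (\<forall>\<phi> :: ('a \<Rightarrow>\<^sub>L real) \<Rightarrow>\<^sub>L real. \<exists>x::'a. \<forall>f. blinfun_apply \<phi> f = blinfun_apply f x)"

definition smooth_point :: "'a::real_normed_vector \<Rightarrow> bool" where
  "smooth_point x \<longleftrightarrow> x \<noteq> 0 \<and> (\<exists>!f :: 'a \<Rightarrow>\<^sub>L real. norm f = 1 \<and> blinfun_apply f x = norm x)"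

definition smooth_space :: "'a::real_normed_vector itself \<Rightarrow> bool" where
  "smooth_space _ \<longleftrightarrow> (\<forall>y::'a. y \<noteq> 0 \<longrightarrow> smooth_point y)"

text \<open>Dual space of a linear subspace S of a normed space (with the induced norm):
  bounded linear functionals on S, compared only on S.\<close>
definition bounded_linear_on :: "'v::real_normed_vector set \<Rightarrow> ('v \<Rightarrow> real) \<Rightarrow> bool" where
  "bounded_linear_on S f \<longleftrightarrow>
     (\<forall>a\<in>S. \<forall>b\<in>S. f (a + b) = f a + f b) \<and>
     (\<forall>c. \<forall>a\<in>S. f (c *\<^sub>R a) = c * f a) \<and>
     (\<exists>K. \<forall>a\<in>S. \<bar>f a\<bar> \<le> K * norm a)"

definition dual_norm_on :: "'v::real_normed_vector set \<Rightarrow> ('v \<Rightarrow> real) \<Rightarrow> real" where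
  "dual_norm_on S f = Sup {\<bar>f a\<bar> | a. a \<in> S \<and> norm a \<le> 1}"

definition smooth_point_on :: "'v::real_normed_vector set \<Rightarrow> 'v \<Rightarrow> bool" where
  "smooth_point_on S x \<longleftrightarrow> x \<in> S \<and> x \<noteq> 0 \<and>
     (\<exists>f. bounded_linear_on S f \<and> dual_norm_on S f = 1 \<and> f x = norm x \<and>
        (\<forall>g. bounded_linear_on S g \<and> dual_norm_on S g = 1 \<and> g x = norm x \<longrightarrow>
             (\<forall>a\<in>S. g a = f a)))"

definition compact_ops :: "('a::real_normed_vector \<Rightarrow>\<^sub>L 'b::real_normed_vector) set" where
  "compact_ops = {T. compact (closure (blinfun_apply T ` cball 0 1))}"

definition uniform_BPB_approx ::
  "('a::real_normed_vector \<Rightarrow>\<^sub>L 'b::real_normed_vector) \<Rightarrow> real \<Rightarrow> ('a \<Rightarrow>\<^sub>L 'b) \<Rightarrow> bool" where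
  "uniform_BPB_approx T \<epsilon> A \<longleftrightarrow> norm A = 1 \<and>
     (\<exists>\<delta>>0. \<forall>x0. norm x0 = 1 \<and> norm (T x0) > 1 - \<delta> \<longrightarrow>
        (\<exists>u0. norm u0 = 1 \<and> norm (A u0) = 1 \<and> norm (u0 - x0) < \<epsilon> \<and> norm (A - T) < \<epsilon>))"

end

theory Submission
  imports Defs
begin


definition hb_good :: "('a::real_vector \<Rightarrow> real) \<Rightarrow> ('a \<times> real) set \<Rightarrow> ('a \<times> real) set \<Rightarrow> bool" where
  "hb_good p G0 H \<longleftrightarrow>
    (\<forall>x a b. (x,a)\<in>H \<longrightarrow> (x,b)\<in>H \<longrightarrow> a = b) \<and>
    (\<forall>x a y b. (x,a)\<in>H \<longrightarrow> (y,b)\<in>H \<longrightarrow> (x+y,a+b)\<in>H) \<and>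
    (\<forall>x a c. (x,a)\<in>H \<longrightarrow> (c *\<^sub>R x, c*a)\<in>H) \<and>
    (\<forall>x a. (x,a)\<in>H \<longrightarrow> a \<le> p x) \<and> G0 \<subseteq> H"

lemma hb_extend:
  fixes p :: "'a::real_vector \<Rightarrow> real"
  assumes padd: "\<And>x y. p (x+y) \<le> p x + p y"
    and phom: "\<And>c x. c \<ge> 0 \<Longrightarrow> p (c *\<^sub>R x) = c * p x"
    and good: "hb_good p G0 M" and z0: "(0,0) \<in> M"
    and x0: "\<And>a. (x0,a) \<notin> M"
  shows "\<exists>M'. hb_good p G0 M' \<and> M \<subseteq> M' \<and> M' \<noteq> M"
proof -
  from good have hfun: "\<And>x a b. (x,a)\<in>M \<Longrightarrow> (x,b)\<in>M \<Longrightarrow> a = b"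
    and add: "\<And>x a y b. (x,a)\<in>M \<Longrightarrow> (y,b)\<in>M \<Longrightarrow> (x+y,a+b)\<in>M"
    and scl: "\<And>x a c. (x,a)\<in>M \<Longrightarrow> (c *\<^sub>R x, c*a)\<in>M"
    and bnd: "\<And>x a. (x,a)\<in>M \<Longrightarrow> a \<le> p x" and G0: "G0 \<subseteq> M"
    unfolding hb_good_def by blast+
  have key: "b' - p (y' - x0) \<le> p (y + x0) - b" if "(y,b)\<in>M" "(y',b')\<in>M" for y b y' b'
  proof -
    have "b + b' \<le> p (y + y')" using bnd[OF add[OF that]] .
    also have "y + y' = (y' - x0) + (y + x0)" by simp
    finally show ?thesis using padd[of "y' - x0" "y + x0"] by linarith
  qed
  define S where "S = {b - p (y - x0) | y b. (y,b)\<in>M}"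
  define c where "c = Sup S"
  have Sne: "S \<noteq> {}" using z0 unfolding S_def by blast
  have Sbdd: "bdd_above S" unfolding S_def bdd_above_def using key[OF z0] by auto
  have c1: "b - p (y - x0) \<le> c" if "(y,b)\<in>M" for y b
    unfolding c_def by (rule cSup_upper[OF _ Sbdd]) (use that in \<open>auto simp: S_def\<close>)
  have c2: "c \<le> p (y + x0) - b" if "(y,b)\<in>M" for y b
    unfolding c_def by (rule cSup_least[OF Sne]) (use key[OF that] in \<open>auto simp: S_def\<close>)
  define M' where "M' = {(y + t *\<^sub>R x0, b + t * c) | y b t. (y,b)\<in>M}"
  have sub: "(y - y', b - b') \<in> M" if "(y,b)\<in>M" "(y',b')\<in>M" for y b y' b'
    using add[OF that(1) scl[OF that(2), of "-1"]] by simp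
  have uniq: "t = t' \<and> y = y'" if "(y,b)\<in>M" "(y',b')\<in>M" "y + t *\<^sub>R x0 = y' + t' *\<^sub>R x0" for y b y' b' t t'
  proof (cases "t = t'")
    case True thus ?thesis using that(3) by simp
  next
    case False
    have "(t' - t) *\<^sub>R x0 = y - y'" using that(3) by (simp add: algebra_simps)
    hence "(1/(t'-t)) *\<^sub>R ((t' - t) *\<^sub>R x0) = (1/(t'-t)) *\<^sub>R (y - y')" by simp
    hence "x0 = (1/(t'-t)) *\<^sub>R (y - y')" using False by simp
    hence "(x0, (1/(t'-t)) * (b - b')) \<in> M" using scl[OF sub[OF that(1,2)], of "1/(t'-t)"] by simp
    thus ?thesis using x0 by blast
  qed
  have "hb_good p G0 M'"
    unfolding hb_good_def
  proof (intro conjI allI impI)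
    fix x a b assume "(x,a)\<in>M'" "(x,b)\<in>M'"
    then obtain y1 b1 t1 y2 b2 t2 where "(y1,b1)\<in>M" "(y2,b2)\<in>M" "x = y1 + t1 *\<^sub>R x0" "a = b1 + t1*c"
      "x = y2 + t2 *\<^sub>R x0" "b = b2 + t2*c" unfolding M'_def by blast
    thus "a = b" using uniq hfun by metis
  next
    fix x a y b assume "(x,a)\<in>M'" "(y,b)\<in>M'"
    then obtain y1 b1 t1 y2 b2 t2 where h: "(y1,b1)\<in>M" "(y2,b2)\<in>M" "x = y1 + t1 *\<^sub>R x0" "a = b1 + t1*c"
      "y = y2 + t2 *\<^sub>R x0" "b = b2 + t2*c" unfolding M'_def by blast
    have "(x+y, a+b) = ((y1+y2) + (t1+t2) *\<^sub>R x0, (b1+b2) + (t1+t2)*c)"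
      using h by (simp add: algebra_simps)
    thus "(x+y,a+b)\<in>M'" unfolding M'_def using add[OF h(1,2)] by blast
  next
    fix x a r assume "(x,a)\<in>M'"
    then obtain y1 b1 t1 where h: "(y1,b1)\<in>M" "x = y1 + t1 *\<^sub>R x0" "a = b1 + t1*c"
      unfolding M'_def by blast
    have "(r *\<^sub>R x, r*a) = (r *\<^sub>R y1 + (r*t1) *\<^sub>R x0, r*b1 + (r*t1)*c)"
      using h by (simp add: algebra_simps)
    thus "(r *\<^sub>R x, r*a)\<in>M'" unfolding M'_def using scl[OF h(1)] by blast
  next
    fix x a assume "(x,a)\<in>M'"
    then obtain y b t where h: "(y,b)\<in>M" "x = y + t *\<^sub>R x0" "a = b + t*c"
      unfolding M'_def by blast
    show "a \<le> p x"
    proof (cases "t = 0")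
      case True thus ?thesis using bnd[OF h(1)] h by simp
    next
      case False
      show ?thesis
      proof (cases "t > 0")
        case True
        have m: "((1/t) *\<^sub>R y, (1/t)*b) \<in> M" using scl[OF h(1)] .
        have "c \<le> p ((1/t) *\<^sub>R y + x0) - (1/t)*b" using c2[OF m] .
        hence "t * c \<le> t * p ((1/t) *\<^sub>R y + x0) - b" using True by (simp add: field_simps)
        also have "t * p ((1/t) *\<^sub>R y + x0) = p (t *\<^sub>R ((1/t) *\<^sub>R y + x0))"
          using phom[of t] True by simp
        also have "t *\<^sub>R ((1/t) *\<^sub>R y + x0) = x" using h True by (simp add: algebra_simps)
        finally show ?thesis using h by linarith
      next
        case False
        define s where "s = - t"
        have s: "s > 0" using False \<open>t \<noteq> 0\<close> unfolding s_def by linarith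
        have m: "((1/s) *\<^sub>R y, (1/s)*b) \<in> M" using scl[OF h(1)] .
        have "(1/s)*b - p ((1/s) *\<^sub>R y - x0) \<le> c" using c1[OF m] .
        hence "b - s * c \<le> s * p ((1/s) *\<^sub>R y - x0)" using s by (simp add: field_simps)
        also have "s * p ((1/s) *\<^sub>R y - x0) = p (s *\<^sub>R ((1/s) *\<^sub>R y - x0))"
          using phom[of s] s by simp
        also have "s *\<^sub>R ((1/s) *\<^sub>R y - x0) = x" using h s by (simp add: algebra_simps s_def)
        finally show ?thesis using h by (simp add: s_def)
      qed
    qed
  next
    show "G0 \<subseteq> M'"
    proof
      fix g assume "g \<in> G0"
      then obtain x a where "g = (x,a)" "(x,a)\<in>M" using G0 by (metis prod.collapse subsetD)
      moreover have "(x,a) = (x + 0 *\<^sub>R x0, a + 0*c)" by simp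
      ultimately show "g \<in> M'" unfolding M'_def by blast
    qed
  qed
  moreover have "M \<subseteq> M'"
  proof
    fix g assume "g \<in> M"
    then obtain x a where "g = (x,a)" "(x,a)\<in>M" by (metis prod.collapse)
    moreover have "(x,a) = (x + 0 *\<^sub>R x0, a + 0*c)" by simp
    ultimately show "g \<in> M'" unfolding M'_def by blast
  qed
  moreover have "(x0, c) \<in> M'"
  proof -
    have "(x0,c) = (0 + 1 *\<^sub>R x0, 0 + 1*c)" by simp
    thus ?thesis unfolding M'_def using z0 by blast
  qed
  hence "M' \<noteq> M" using x0 by blast
  ultimately show ?thesis by blast
qed
lemma hb_line:
  fixes p :: "'a::real_vector \<Rightarrow> real"
  assumes padd: "\<And>x y. p (x+y) \<le> p x + p y"
    and phom: "\<And>c x. c \<ge> 0 \<Longrightarrow> p (c *\<^sub>R x) = c * p x"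
    and z: "z \<noteq> 0" and za: "\<And>t. t * a \<le> p (t *\<^sub>R z)"
  shows "\<exists>\<phi>. (\<forall>x y. \<phi> (x+y) = \<phi> x + \<phi> y) \<and> (\<forall>c x. \<phi> (c *\<^sub>R x) = c * \<phi> x)
     \<and> (\<forall>x. \<phi> x \<le> p x) \<and> \<phi> z = a"
proof -
  define G0 where "G0 = {(t *\<^sub>R z, t*a) | t. True}"
  define A where "A = {H. hb_good p G0 H}"
  have G0good: "G0 \<in> A"
    unfolding A_def hb_good_def
  proof (intro CollectI conjI allI impI)
    fix x a1 b1 assume "(x,a1)\<in>G0" "(x,b1)\<in>G0"
    then obtain t1 t2 where "x = t1 *\<^sub>R z" "a1 = t1*a" "x = t2 *\<^sub>R z" "b1 = t2*a"
      unfolding G0_def by blast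
    thus "a1 = b1" using z by (metis scaleR_cancel_right)
  next
    fix x a1 y b1 assume "(x,a1)\<in>G0" "(y,b1)\<in>G0"
    then obtain t1 t2 where "x = t1 *\<^sub>R z" "a1 = t1*a" "y = t2 *\<^sub>R z" "b1 = t2*a"
      unfolding G0_def by blast
    hence "(x+y, a1+b1) = ((t1+t2) *\<^sub>R z, (t1+t2)*a)" by (simp add: algebra_simps)
    thus "(x+y, a1+b1) \<in> G0" unfolding G0_def by blast
  next
    fix x a1 c assume "(x,a1)\<in>G0"
    then obtain t1 where "x = t1 *\<^sub>R z" "a1 = t1*a" unfolding G0_def by blast
    hence "(c *\<^sub>R x, c*a1) = ((c*t1) *\<^sub>R z, (c*t1)*a)" by simp
    thus "(c *\<^sub>R x, c*a1) \<in> G0" unfolding G0_def by blast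
  next
    fix x a1 assume "(x,a1)\<in>G0"
    then obtain t1 where "x = t1 *\<^sub>R z" "a1 = t1*a" unfolding G0_def by blast
    thus "a1 \<le> p x" using za by simp
  qed simp
  have "\<forall>C\<in>chains A. \<exists>U\<in>A. \<forall>X\<in>C. X \<subseteq> U"
  proof
    fix C assume C: "C \<in> chains A"
    show "\<exists>U\<in>A. \<forall>X\<in>C. X \<subseteq> U"
    proof (cases "C = {}")
      case True thus ?thesis using G0good by blast
    next
      case False
      have CA: "\<And>H. H \<in> C \<Longrightarrow> hb_good p G0 H" using C unfolding chains_def A_def by blast
      have ch: "\<And>H1 H2. H1 \<in> C \<Longrightarrow> H2 \<in> C \<Longrightarrow> H1 \<subseteq> H2 \<or> H2 \<subseteq> H1"
        using C unfolding chains_def chain_subset_def by blast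
      have two: "\<exists>H\<in>C. g1 \<in> H \<and> g2 \<in> H" if "g1 \<in> \<Union>C" "g2 \<in> \<Union>C" for g1 g2
      proof -
        from that obtain H1 H2 where "H1\<in>C" "H2\<in>C" "g1\<in>H1" "g2\<in>H2" by blast
        thus ?thesis using ch[of H1 H2] by blast
      qed
      have "hb_good p G0 (\<Union>C)"
        unfolding hb_good_def
      proof (intro conjI allI impI)
        fix x a1 b1 assume "(x,a1)\<in>\<Union>C" "(x,b1)\<in>\<Union>C"
        then obtain H where "H\<in>C" "(x,a1)\<in>H" "(x,b1)\<in>H" using two by blast
        thus "a1 = b1" using CA unfolding hb_good_def by blast
      next
        fix x a1 y b1 assume "(x,a1)\<in>\<Union>C" "(y,b1)\<in>\<Union>C"
        then obtain H where "H\<in>C" "(x,a1)\<in>H" "(y,b1)\<in>H" using two by blast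
        thus "(x+y,a1+b1)\<in>\<Union>C" using CA unfolding hb_good_def by blast
      next
        fix x a1 c assume "(x,a1)\<in>\<Union>C"
        then obtain H where "H\<in>C" "(x,a1)\<in>H" by blast
        thus "(c *\<^sub>R x, c*a1)\<in>\<Union>C" using CA unfolding hb_good_def by blast
      next
        fix x a1 assume "(x,a1)\<in>\<Union>C"
        then obtain H where "H\<in>C" "(x,a1)\<in>H" by blast
        thus "a1 \<le> p x" using CA unfolding hb_good_def by blast
      next
        obtain H where "H \<in> C" using False by blast
        thus "G0 \<subseteq> \<Union>C" using CA unfolding hb_good_def by blast
      qed
      thus ?thesis unfolding A_def by blast
    qed
  qed
  from Zorn_Lemma2[OF this] obtain M where MA: "M \<in> A" and max: "\<forall>X\<in>A. M \<subseteq> X \<longrightarrow> X = M" by blast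
  have good: "hb_good p G0 M" using MA unfolding A_def by blast
  have z0: "(0,0) \<in> M"
  proof -
    have "(0 *\<^sub>R z, 0*a) \<in> G0" unfolding G0_def by blast
    thus ?thesis using good unfolding hb_good_def by auto
  qed
  have tot: "\<exists>b. (x,b) \<in> M" for x
  proof (rule ccontr)
    assume "\<not> ?thesis"
    hence "\<And>b. (x,b) \<notin> M" by blast
    from hb_extend[OF padd phom good z0 this] obtain M' where "hb_good p G0 M'" "M \<subseteq> M'" "M' \<noteq> M"
      by blast
    thus False using max unfolding A_def by blast
  qed
  have hf: "\<And>x a b. (x,a)\<in>M \<Longrightarrow> (x,b)\<in>M \<Longrightarrow> a = b"
    and hadd: "\<And>x a y b. (x,a)\<in>M \<Longrightarrow> (y,b)\<in>M \<Longrightarrow> (x+y,a+b)\<in>M"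
    and hscl: "\<And>x a c. (x,a)\<in>M \<Longrightarrow> (c *\<^sub>R x, c*a)\<in>M"
    and hbnd: "\<And>x a. (x,a)\<in>M \<Longrightarrow> a \<le> p x" and hG0: "G0 \<subseteq> M"
    using good unfolding hb_good_def by blast+
  define \<phi> where "\<phi> x = (THE b. (x,b) \<in> M)" for x
  have phiM: "(x, \<phi> x) \<in> M" for x
    unfolding \<phi>_def using tot[of x] hf by (metis theI)
  have phieq: "\<phi> x = b" if "(x,b) \<in> M" for x b
    using hf[OF that phiM[of x]] by simp
  show ?thesis
  proof (intro exI[of _ \<phi>] conjI allI)
    fix x y show "\<phi> (x+y) = \<phi> x + \<phi> y" using phieq[OF hadd[OF phiM phiM]] .
  next
    fix c x show "\<phi> (c *\<^sub>R x) = c * \<phi> x" using phieq[OF hscl[OF phiM]] .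
  next
    fix x show "\<phi> x \<le> p x" using hbnd[OF phiM] .
  next
    have "(1 *\<^sub>R z, 1*a) \<in> G0" unfolding G0_def by blast
    thus "\<phi> z = a" using hG0 phieq by auto
  qed
qed



lemma hb_sep:
  fixes z :: "'a::real_normed_vector"
  assumes "z \<noteq> 0"
  shows "\<exists>\<phi> :: 'a \<Rightarrow>\<^sub>L real. blinfun_apply \<phi> z \<noteq> 0"
proof -
  have "\<exists>\<phi>. (\<forall>x y. \<phi> (x+y) = \<phi> x + \<phi> y) \<and> (\<forall>c x. \<phi> (c *\<^sub>R x) = c * \<phi> x)
     \<and> (\<forall>x. \<phi> x \<le> norm x) \<and> \<phi> z = norm z"
    by (rule hb_line[OF norm_triangle_ineq _ assms]) (auto intro: mult_right_mono)
  then obtain \<phi> where p: "\<And>x y. \<phi> (x+y) = \<phi> x + \<phi> y" "\<And>c x. \<phi> (c *\<^sub>R x) = c * \<phi> x"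
     "\<And>x. \<phi> x \<le> norm x" "\<phi> z = norm z" by blast
  have b: "norm (\<phi> x) \<le> norm x * 1" for x
  proof -
    have "\<phi> (-x) = - \<phi> x" using p(2)[of "-1" x] by simp
    thus ?thesis using p(3)[of x] p(3)[of "-x"] by auto
  qed
  have bl: "bounded_linear \<phi>" by (rule bounded_linear_intro[OF p(1) _ b]) (simp add: p(2))
  show ?thesis
    by (rule exI[of _ "Blinfun \<phi>"]) (simp add: bounded_linear_Blinfun_apply[OF bl] p(4) assms)
qed

lemma qmono_aux:
  fixes y0 x :: "'b::real_normed_vector"
  assumes "norm y0 = 1" "0 < s" "s \<le> r"
  shows "(norm (y0 + s *\<^sub>R x) - 1) / s \<le> (norm (y0 + r *\<^sub>R x) - 1) / r"
proof -
  have r: "r > 0" using assms by linarith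
  have eq: "y0 + s *\<^sub>R x = (1 - s/r) *\<^sub>R y0 + (s/r) *\<^sub>R (y0 + r *\<^sub>R x)"
    using r by (simp add: algebra_simps)
  have "norm (y0 + s *\<^sub>R x) \<le> norm ((1 - s/r) *\<^sub>R y0) + norm ((s/r) *\<^sub>R (y0 + r *\<^sub>R x))"
    unfolding eq by (rule norm_triangle_ineq)
  also have "\<dots> = (1 - s/r) + (s/r) * norm (y0 + r *\<^sub>R x)"
    using assms r by (simp add: abs_of_nonneg)
  finally have "norm (y0 + s *\<^sub>R x) - 1 \<le> (s/r) * (norm (y0 + r *\<^sub>R x) - 1)"
    by (simp add: algebra_simps)
  hence "(norm (y0 + s *\<^sub>R x) - 1) \<le> ((norm (y0 + r *\<^sub>R x) - 1) / r) * s" by (simp add: mult.commute)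
  thus ?thesis using assms by (simp add: pos_divide_le_eq)
qed

lemma smooth_gateaux:
  fixes y0 w :: "'b::real_normed_vector" and \<psi> :: "'b \<Rightarrow>\<^sub>L real"
  assumes sm: "smooth_point y0" and n1: "norm y0 = 1" and psi1: "norm \<psi> = 1"
    and psiy: "blinfun_apply \<psi> y0 = 1" and eta: "\<eta> > 0"
  shows "\<exists>s>0. norm (y0 + s *\<^sub>R w) \<le> 1 + s * (blinfun_apply \<psi> w + \<eta>)"
proof (rule ccontr)
  assume "\<not> ?thesis"
  hence big: "\<And>s. s > 0 \<Longrightarrow> norm (y0 + s *\<^sub>R w) > 1 + s * (blinfun_apply \<psi> w + \<eta>)"
    by force
  define q where "q x s = (norm (y0 + s *\<^sub>R x) - 1)/s" for x s
  define D where "D x = Inf {q x s | s. s > 0}" for x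
  have qlow: "- norm x \<le> q x s" if "s > 0" for x s
  proof -
    have "norm y0 \<le> norm (y0 + s *\<^sub>R x) + norm (s *\<^sub>R x)"
      by (metis add_diff_cancel norm_triangle_ineq4)
    hence "1 - s * norm x \<le> norm (y0 + s *\<^sub>R x)" using that n1 by simp
    hence "(- norm x) * s \<le> norm (y0 + s *\<^sub>R x) - 1" by (simp add: algebra_simps)
    thus ?thesis unfolding q_def using that by (simp add: pos_le_divide_eq)
  qed
  have qmono: "q x s \<le> q x r" if "0 < s" "s \<le> r" for x s r
    unfolding q_def by (rule qmono_aux[OF n1 that])
  have bdd: "bdd_below {q x s | s. s > 0}" for x
    unfolding bdd_below_def using qlow by blast
  have ne: "{q x s | s. s > 0} \<noteq> {}" for x by (auto intro: exI[of _ 1])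
  have Dle: "D x \<le> q x s" if "s > 0" for x s
    unfolding D_def by (rule cInf_lower[OF _ bdd]) (use that in blast)
  have Dapp: "\<exists>s>0. q x s < D x + e" if "e > 0" for x e
  proof (rule ccontr)
    assume "\<not> ?thesis"
    hence "\<And>s. s > 0 \<Longrightarrow> D x + e \<le> q x s" by force
    hence "D x + e \<le> D x" unfolding D_def[of x] by (intro cInf_greatest[OF ne]) blast
    thus False using that by simp
  qed
  have Dge: "c \<le> D x" if "\<And>s. s > 0 \<Longrightarrow> c \<le> q x s" for x c
    unfolding D_def by (rule cInf_greatest[OF ne]) (use that in blast)
  have D0: "D 0 = 0"
  proof -
    have "q 0 s = 0" for s unfolding q_def using n1 by simp
    thus ?thesis using Dle[of 1 0] Dge[of 0 0] by force
  qed
  have Dhom: "D (c *\<^sub>R x) = c * D x" if "c > 0" for c x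
  proof -
    have qc: "q (c *\<^sub>R x) s = c * q x (c * s)" if "s > 0" for s
      unfolding q_def using \<open>c > 0\<close> that by (simp add: field_simps)
    have "D (c *\<^sub>R x) \<le> c * D x + e" if "e > 0" for e
    proof -
      have "e/c > 0" using that \<open>c>0\<close> by simp
      then obtain s where s: "s > 0" "q x s < D x + e / c" using Dapp by blast
      have "D (c *\<^sub>R x) \<le> q (c *\<^sub>R x) (s / c)" using Dle s \<open>c > 0\<close> by simp
      also have "\<dots> = c * q x s" using qc[of "s/c"] s \<open>c > 0\<close> by simp
      also have "\<dots> \<le> c * (D x + e / c)" using s \<open>c > 0\<close> by simp
      also have "\<dots> = c * D x + e" using \<open>c > 0\<close> by (simp add: field_simps)
      finally show ?thesis .
    qed
    hence le: "D (c *\<^sub>R x) \<le> c * D x" by (meson field_le_epsilon)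
    have "c * D x \<le> D (c *\<^sub>R x)"
    proof (rule Dge)
      fix s :: real assume "s > 0"
      thus "c * D x \<le> q (c *\<^sub>R x) s" using qc[of s] Dle[of "c * s" x] that by simp
    qed
    thus ?thesis using le by simp
  qed
  have Dhom0: "D (c *\<^sub>R x) = c * D x" if "c \<ge> 0" for c x
    using Dhom[of c x] D0 that by (cases "c = 0") auto
  have Dadd: "D (x + y) \<le> D x + D y" for x y
  proof -
    have "D (x + y) \<le> D x + D y + 2 * e" if e: "e > 0" for e
    proof -
      obtain s1 where s1: "s1 > 0" "q x s1 < D x + e" using Dapp[OF e] by blast
      obtain s2 where s2: "s2 > 0" "q y s2 < D y + e" using Dapp[OF e] by blast
      define s where "s = min s1 s2"
      have s: "s > 0" "s \<le> s1" "s \<le> s2" using s1 s2 unfolding s_def by auto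
      have "y0 + (s/2) *\<^sub>R (x + y) = (1/2) *\<^sub>R (y0 + s *\<^sub>R x) + (1/2) *\<^sub>R (y0 + s *\<^sub>R y)"
        by (simp add: algebra_simps flip: scaleR_add_left)
      hence "norm (y0 + (s/2) *\<^sub>R (x + y)) \<le> (1/2) * norm (y0 + s *\<^sub>R x) + (1/2) * norm (y0 + s *\<^sub>R y)"
        by (metis (no_types) abs_of_pos norm_scaleR norm_triangle_ineq zero_less_divide_1_iff zero_less_numeral)
      hence "2 * (norm (y0 + (s/2) *\<^sub>R (x + y)) - 1) \<le> (norm (y0 + s *\<^sub>R x) - 1) + (norm (y0 + s *\<^sub>R y) - 1)"
        by (simp add: field_simps)
      hence "q (x+y) (s/2) \<le> q x s + q y s" unfolding q_def using s
        by (simp add: field_simps) (metis distrib_left less_eq_real_def mult_left_mono)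
      moreover have "q x s \<le> q x s1" "q y s \<le> q y s2" using qmono s by auto
      moreover have "D (x+y) \<le> q (x+y) (s/2)" using Dle s by simp
      ultimately show ?thesis using s1 s2 by linarith
    qed
    note E = this
    show ?thesis
    proof (rule field_le_epsilon)
      fix e :: real assume "e > 0"
      thus "D (x + y) \<le> D x + D y + e" using E[of "e/2"] by simp
    qed
  qed
  have Dnorm: "D x \<le> norm x" for x
  proof -
    have "D x \<le> q x 1" using Dle by simp
    also have "\<dots> \<le> norm x" unfolding q_def using n1 norm_triangle_ineq[of y0 x] by simp
    finally show ?thesis .
  qed
  have Dneg: "D (- y0) \<le> -1"
  proof -
    have "D (-y0) \<le> q (-y0) 1" using Dle by simp
    thus ?thesis unfolding q_def by simp
  qed
  have Dw: "D w \<ge> blinfun_apply \<psi> w + \<eta>"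
  proof (rule Dge)
    fix s :: real assume s: "s > 0"
    thus "blinfun_apply \<psi> w + \<eta> \<le> q w s" unfolding q_def using big[OF s]
      by (simp add: field_simps)
  qed
  have w0: "w \<noteq> 0" using Dw D0 eta by auto
  have za: "t * D w \<le> D (t *\<^sub>R w)" for t
  proof (cases "t \<ge> 0")
    case True thus ?thesis using Dhom0 by simp
  next
    case False
    have "D (t *\<^sub>R w) = (-t) * D (-w)" using Dhom0[of "-t" "-w"] False by simp
    moreover have "0 \<le> D w + D (-w)" using Dadd[of w "-w"] D0 by simp
    moreover have "0 \<le> (-t) * (D w + D (-w))" using False \<open>0 \<le> D w + D (-w)\<close>
      by (intro mult_nonneg_nonneg) auto
    ultimately show ?thesis by (simp add: algebra_simps)
  qed
  have "\<exists>\<phi>. (\<forall>x y. \<phi> (x+y) = \<phi> x + \<phi> y) \<and> (\<forall>c x. \<phi> (c *\<^sub>R x) = c * \<phi> x)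
     \<and> (\<forall>x. \<phi> x \<le> D x) \<and> \<phi> w = D w"
    by (rule hb_line[OF Dadd Dhom0 w0 za])
  then obtain \<phi> where p: "\<And>x y. \<phi> (x+y) = \<phi> x + \<phi> y" "\<And>c x. \<phi> (c *\<^sub>R x) = c * \<phi> x"
     "\<And>x. \<phi> x \<le> D x" "\<phi> w = D w" by blast
  have neg: "\<phi> (-x) = - \<phi> x" for x using p(2)[of "-1" x] by simp
  have b: "norm (\<phi> x) \<le> norm x * 1" for x
    using p(3)[of x] p(3)[of "-x"] Dnorm[of x] Dnorm[of "-x"] neg[of x] by auto
  have bl: "bounded_linear \<phi>" by (rule bounded_linear_intro[OF p(1) _ b]) (simp add: p(2))
  define \<Phi> where "\<Phi> = Blinfun \<phi>"
  have Pa: "blinfun_apply \<Phi> = \<phi>" unfolding \<Phi>_def by (rule bounded_linear_Blinfun_apply[OF bl])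
  have "\<phi> y0 \<ge> 1" using p(3)[of "-y0"] Dneg neg[of y0] by simp
  moreover have "\<phi> y0 \<le> 1" using b[of y0] n1 by simp
  ultimately have py: "\<phi> y0 = 1" by simp
  have "norm \<Phi> \<le> 1" by (rule norm_blinfun_bound) (use b Pa in auto)
  moreover have "1 \<le> norm \<Phi>" using norm_blinfun[of \<Phi> y0] Pa py n1 by simp
  ultimately have nP: "norm \<Phi> = 1" by simp
  from sm have "\<exists>!f :: 'b \<Rightarrow>\<^sub>L real. norm f = 1 \<and> blinfun_apply f y0 = norm y0"
    unfolding smooth_point_def by blast
  hence "\<Phi> = \<psi>" using nP Pa py psi1 psiy n1 by auto
  hence "\<phi> w = blinfun_apply \<psi> w" using Pa by simp
  thus False using p(4) Dw eta by simp
qed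



lemma compact_opsI:
  fixes S :: "'a::real_normed_vector \<Rightarrow>\<^sub>L 'b::real_normed_vector"
  assumes "compact C" "blinfun_apply S ` cball 0 1 \<subseteq> C"
  shows "S \<in> compact_ops"
proof -
  have "closure (blinfun_apply S ` cball 0 1) \<subseteq> C"
    using assms by (simp add: closure_minimal compact_imp_closed)
  hence "closure (blinfun_apply S ` cball 0 1) = C \<inter> closure (blinfun_apply S ` cball 0 1)" by blast
  moreover have "compact (C \<inter> closure (blinfun_apply S ` cball 0 1))"
    using assms(1) by (rule compact_Int_closed) simp
  ultimately show ?thesis unfolding compact_ops_def by simp
qed

lemma compact_ops_add:
  fixes S R :: "'a::real_normed_vector \<Rightarrow>\<^sub>L 'b::real_normed_vector"
  assumes "S \<in> compact_ops" "R \<in> compact_ops"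
  shows "S + R \<in> compact_ops"
proof (rule compact_opsI)
  let ?C = "{x + y | x y. x \<in> closure (blinfun_apply S ` cball 0 1) \<and> y \<in> closure (blinfun_apply R ` cball 0 1)}"
  show "compact ?C" using assms unfolding compact_ops_def by (intro compact_sums) auto
  show "blinfun_apply (S + R) ` cball 0 1 \<subseteq> ?C"
    by (auto simp: blinfun.add_left intro!: closure_subset[THEN subsetD])
qed

lemma compact_ops_scale:
  fixes S :: "'a::real_normed_vector \<Rightarrow>\<^sub>L 'b::real_normed_vector"
  assumes "S \<in> compact_ops"
  shows "c *\<^sub>R S \<in> compact_ops"
proof (rule compact_opsI)
  let ?C = "(\<lambda>y. c *\<^sub>R y) ` closure (blinfun_apply S ` cball 0 1)"
  show "compact ?C" using assms unfolding compact_ops_def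
    by (intro compact_continuous_image continuous_intros) auto
  show "blinfun_apply (c *\<^sub>R S) ` cball 0 1 \<subseteq> ?C"
  proof (rule image_subsetI)
    fix x assume "x \<in> cball (0::'a) 1"
    hence "blinfun_apply S x \<in> blinfun_apply S ` cball 0 1" by (rule imageI)
    hence "blinfun_apply S x \<in> closure (blinfun_apply S ` cball 0 1)" by (rule closure_subset[THEN subsetD])
    moreover have "blinfun_apply (c *\<^sub>R S) x = c *\<^sub>R blinfun_apply S x"
      by (rule blinfun.scaleR_left)
    ultimately show "blinfun_apply (c *\<^sub>R S) x \<in> ?C" by (simp only:) (rule imageI)
  qed
qed

lemma rank1_ops:
  fixes \<phi> :: "'a::real_normed_vector \<Rightarrow>\<^sub>L real" and y :: "'b::real_normed_vector"
  shows "\<exists>S \<in> compact_ops. \<forall>x. blinfun_apply S x = blinfun_apply \<phi> x *\<^sub>R y"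
proof -
  have bl: "bounded_linear (\<lambda>x. blinfun_apply \<phi> x *\<^sub>R y)"
    by (intro bounded_linear_compose[OF bounded_linear_scaleR_left] blinfun.bounded_linear_right)
  define S where "S = Blinfun (\<lambda>x. blinfun_apply \<phi> x *\<^sub>R y)"
  have Sa: "blinfun_apply S x = blinfun_apply \<phi> x *\<^sub>R y" for x
    unfolding S_def using bounded_linear_Blinfun_apply[OF bl] by simp
  have "S \<in> compact_ops"
  proof (rule compact_opsI)
    show "compact ((\<lambda>c. c *\<^sub>R y) ` cball 0 (norm \<phi>))"
      by (intro compact_continuous_image continuous_intros) auto
    show "blinfun_apply S ` cball 0 1 \<subseteq> (\<lambda>c. c *\<^sub>R y) ` cball 0 (norm \<phi>)"
    proof
      fix z assume "z \<in> blinfun_apply S ` cball 0 1"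
      then obtain x where x: "norm x \<le> 1" "z = blinfun_apply \<phi> x *\<^sub>R y" using Sa by auto
      have "norm (blinfun_apply \<phi> x) \<le> norm \<phi>"
        using norm_blinfun[of \<phi> x] x(1) by (meson mult_left_le norm_ge_zero order_trans)
      thus "z \<in> (\<lambda>c. c *\<^sub>R y) ` cball 0 (norm \<phi>)" using x by (auto simp: dist_norm)
    qed
  qed
  thus ?thesis using Sa by blast
qed

lemma fun_on_K:
  fixes \<psi> :: "'b::real_normed_vector \<Rightarrow>\<^sub>L real" and u :: "'a::real_normed_vector"
  assumes p1: "norm \<psi> = 1" and u1: "norm u = 1" and B: "B \<in> compact_ops" "norm B = 1"
    and pB: "blinfun_apply \<psi> (blinfun_apply B u) = 1"
  shows "bounded_linear_on compact_ops (\<lambda>S. blinfun_apply \<psi> (blinfun_apply S u))"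
    and "dual_norm_on compact_ops (\<lambda>S. blinfun_apply \<psi> (blinfun_apply S u)) = 1"
proof -
  have bd: "\<bar>blinfun_apply \<psi> (blinfun_apply S u)\<bar> \<le> norm S" for S :: "'a \<Rightarrow>\<^sub>L 'b"
  proof -
    have "\<bar>blinfun_apply \<psi> (blinfun_apply S u)\<bar> \<le> norm \<psi> * norm (blinfun_apply S u)"
      using norm_blinfun[of \<psi>] by (metis real_norm_def)
    also have "\<dots> \<le> norm S" using norm_blinfun[of S u] p1 u1 by simp
    finally show ?thesis .
  qed
  show "bounded_linear_on compact_ops (\<lambda>S. blinfun_apply \<psi> (blinfun_apply S u))"
    unfolding bounded_linear_on_def
  proof (intro conjI ballI allI)
    fix a b :: "'a \<Rightarrow>\<^sub>L 'b"
    show "blinfun_apply \<psi> (blinfun_apply (a + b) u) = blinfun_apply \<psi> (blinfun_apply a u) + blinfun_apply \<psi> (blinfun_apply b u)"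
      by (simp add: blinfun.add_left blinfun.add_right)
  next
    fix c :: real and a :: "'a \<Rightarrow>\<^sub>L 'b"
    show "blinfun_apply \<psi> (blinfun_apply (c *\<^sub>R a) u) = c * blinfun_apply \<psi> (blinfun_apply a u)"
      by (simp add: blinfun.scaleR_left blinfun.scaleR_right)
  next
    show "\<exists>K. \<forall>a\<in>compact_ops. \<bar>blinfun_apply \<psi> (blinfun_apply a u)\<bar> \<le> K * norm a"
      using bd by (intro exI[of _ 1]) simp
  qed
  show "dual_norm_on compact_ops (\<lambda>S. blinfun_apply \<psi> (blinfun_apply S u)) = 1"
    unfolding dual_norm_on_def
  proof (rule cSup_eq_maximum)
    show "1 \<in> {\<bar>blinfun_apply \<psi> (blinfun_apply a u)\<bar> |a. a \<in> compact_ops \<and> norm a \<le> 1}"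
    proof -
      have "1 = \<bar>blinfun_apply \<psi> (blinfun_apply B u)\<bar>" using pB by simp
      thus ?thesis using B by (intro CollectI exI[of _ B]) simp
    qed
    show "x \<le> 1" if "x \<in> {\<bar>blinfun_apply \<psi> (blinfun_apply a u)\<bar> |a. a \<in> compact_ops \<and> norm a \<le> 1}" for x
    proof -
      have "\<exists>a. x = \<bar>blinfun_apply \<psi> (blinfun_apply a u)\<bar> \<and> a \<in> compact_ops \<and> norm a \<le> 1"
        using that by simp
      then obtain a where a: "x = \<bar>blinfun_apply \<psi> (blinfun_apply a u)\<bar>" "norm a \<le> 1" by blast
      show ?thesis using bd[of a] a by simp
    qed
  qed
qed



lemma smooth_unique_norming:
  fixes A :: "'a::real_normed_vector \<Rightarrow>\<^sub>L 'b::real_normed_vector"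
  assumes Ysm: "smooth_space TYPE('b)" and AK: "A \<in> compact_ops" and nA: "norm A = 1"
    and As: "smooth_point_on compact_ops A"
    and u: "norm u = 1" "norm (blinfun_apply A u) = 1"
    and v: "norm v = 1" "norm (blinfun_apply A v) = 1"
  shows "v = u \<or> v = -u"
proof -
  have psi: "\<exists>\<psi> :: 'b \<Rightarrow>\<^sub>L real. norm \<psi> = 1 \<and> blinfun_apply \<psi> (blinfun_apply A w) = 1"
    if "norm (blinfun_apply A w) = 1" for w
  proof -
    have "blinfun_apply A w \<noteq> 0" using that by auto
    hence "smooth_point (blinfun_apply A w)" using Ysm unfolding smooth_space_def by blast
    thus ?thesis using that unfolding smooth_point_def by auto
  qed
  obtain \<psi>u :: "'b \<Rightarrow>\<^sub>L real" where pu: "norm \<psi>u = 1" "blinfun_apply \<psi>u (blinfun_apply A u) = 1" using psi[OF u(2)] by blast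
  obtain \<psi>v :: "'b \<Rightarrow>\<^sub>L real" where pv: "norm \<psi>v = 1" "blinfun_apply \<psi>v (blinfun_apply A v) = 1" using psi[OF v(2)] by blast
  from As obtain f where
    funiq: "\<And>g. bounded_linear_on compact_ops g \<and> dual_norm_on compact_ops g = 1 \<and> g A = norm A
       \<Longrightarrow> (\<forall>a\<in>compact_ops. g a = f a)"
    unfolding smooth_point_on_def by blast
  have Fu: "\<forall>a\<in>compact_ops. blinfun_apply \<psi>u (blinfun_apply a u) = f a"
    using fun_on_K[OF pu(1) u(1) AK nA pu(2)] pu nA by (intro funiq) simp
  have Fv: "\<forall>a\<in>compact_ops. blinfun_apply \<psi>v (blinfun_apply a v) = f a"
    using fun_on_K[OF pv(1) v(1) AK nA pv(2)] pv nA by (intro funiq) simp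
  define \<sigma> where "\<sigma> = blinfun_apply \<psi>v (blinfun_apply A u)"
  have key: "blinfun_apply \<phi> (u - \<sigma> *\<^sub>R v) = 0" for \<phi> :: "'a \<Rightarrow>\<^sub>L real"
  proof -
    obtain S where S: "S \<in> compact_ops" "\<And>x. blinfun_apply S x = blinfun_apply \<phi> x *\<^sub>R blinfun_apply A u"
      using rank1_ops[of \<phi> "blinfun_apply A u"] by blast
    have "blinfun_apply \<psi>u (blinfun_apply S u) = blinfun_apply \<psi>v (blinfun_apply S v)"
      using Fu Fv S(1) by simp
    hence "blinfun_apply \<phi> u = blinfun_apply \<phi> v * \<sigma>"
      unfolding S(2) \<sigma>_def by (simp add: blinfun.scaleR_right pu(2))
    thus ?thesis by (simp add: blinfun.diff_right blinfun.scaleR_right)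
  qed
  have "u - \<sigma> *\<^sub>R v = 0" using hb_sep key by blast
  hence us: "u = \<sigma> *\<^sub>R v" by simp
  hence "\<bar>\<sigma>\<bar> = 1" using u(1) v(1) by simp
  hence "\<sigma> = 1 \<or> \<sigma> = -1" by linarith
  thus ?thesis using us by auto
qed



lemma unit_bound_pt:
  fixes F :: "'a::real_normed_vector \<Rightarrow>\<^sub>L 'b::real_normed_vector"
  assumes "\<And>x. norm x = 1 \<Longrightarrow> norm (blinfun_apply F x) \<le> B" "0 \<le> B"
  shows "norm (blinfun_apply F x) \<le> B * norm x"
proof (cases "x = 0")
  case True thus ?thesis by simp
next
  case False
  hence n: "norm x > 0" by simp
  have "norm (blinfun_apply F ((1/norm x) *\<^sub>R x)) \<le> B" using assms(1) False by simp
  hence "(1/norm x) * norm (blinfun_apply F x) \<le> B" by (simp add: blinfun.scaleR_right)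
  thus ?thesis using n by (simp add: field_simps)
qed

lemma unit_bound:
  fixes F :: "'a::real_normed_vector \<Rightarrow>\<^sub>L 'b::real_normed_vector"
  assumes "\<And>x. norm x = 1 \<Longrightarrow> norm (blinfun_apply F x) \<le> B" "0 \<le> B"
  shows "norm F \<le> B"
  by (rule norm_blinfun_bound[OF assms(2)]) (rule unit_bound_pt[OF assms])

lemma nearnorm:
  fixes T :: "'a::real_normed_vector \<Rightarrow>\<^sub>L 'b::real_normed_vector"
  assumes "norm T = 1" "\<delta> > 0"
  shows "\<exists>x. norm x = 1 \<and> norm (blinfun_apply T x) > 1 - \<delta>"
proof (rule ccontr)
  assume "\<not> ?thesis"
  hence b: "\<And>x::'a. norm x = 1 \<Longrightarrow> norm (blinfun_apply T x) \<le> max (1 - \<delta>) 0" by force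
  have "norm T \<le> max (1 - \<delta>) 0" using unit_bound[of T "max (1 - \<delta>) 0", OF b] by simp
  thus False using assms by simp
qed

lemma tri4:
  fixes a b :: "'a::real_normed_vector"
  shows "norm (a - b) \<le> norm a + norm b" "norm (a + b) \<le> norm a + norm b"
  by (rule norm_triangle_ineq4, rule norm_triangle_ineq)



lemma cluster:
  fixes T :: "'a::real_normed_vector \<Rightarrow>\<^sub>L 'b::real_normed_vector"
  assumes Ysm: "smooth_space TYPE('b)" and nT: "norm T = 1"
    and H: "\<forall>\<epsilon>>0. \<exists>A \<in> compact_ops. A \<noteq> T \<and> uniform_BPB_approx T \<epsilon> A
                      \<and> smooth_point_on compact_ops A"
    and e: "\<epsilon> > 0"
  shows "\<exists>\<delta>>0. \<exists>u0. norm u0 = 1 \<and> (\<forall>x. norm x = 1 \<and> norm (blinfun_apply T x) > 1 - \<delta>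
            \<longrightarrow> norm (x - u0) < \<epsilon> \<or> norm (x + u0) < \<epsilon>)"
proof -
  obtain A where A: "A \<in> compact_ops" "uniform_BPB_approx T \<epsilon> A" "smooth_point_on compact_ops A"
    using H e by blast
  from A(2) obtain \<delta> where nA: "norm A = 1" and d: "\<delta> > 0"
    and bpb: "\<And>x0. norm x0 = 1 \<and> norm (blinfun_apply T x0) > 1 - \<delta> \<Longrightarrow>
        (\<exists>u0. norm u0 = 1 \<and> norm (blinfun_apply A u0) = 1 \<and> norm (u0 - x0) < \<epsilon> \<and> norm (A - T) < \<epsilon>)"
    unfolding uniform_BPB_approx_def by blast
  obtain x1 where x1: "norm x1 = 1" "norm (blinfun_apply T x1) > 1 - \<delta>" using nearnorm[OF nT d] by blast
  obtain u0 where u0: "norm u0 = 1" "norm (blinfun_apply A u0) = 1" using bpb[OF conjI[OF x1]] by blast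
  have "norm (x - u0) < \<epsilon> \<or> norm (x + u0) < \<epsilon>"
    if x: "norm x = 1" "norm (blinfun_apply T x) > 1 - \<delta>" for x
  proof -
    obtain u where u: "norm u = 1" "norm (blinfun_apply A u) = 1" "norm (u - x) < \<epsilon>"
      using bpb[OF conjI[OF x]] by blast
    have "u = u0 \<or> u = -u0" by (rule smooth_unique_norming[OF Ysm A(1) nA A(3) u0 u(1,2)])
    thus ?thesis
    proof
      assume "u = u0" thus ?thesis using u(3) by (simp add: norm_minus_commute)
    next
      assume "u = -u0"
      hence "x + u0 = -(u - x)" by simp
      thus ?thesis using u(3) by (metis norm_minus_cancel)
    qed
  qed
  thus ?thesis using d u0 by blast
qed

lemma attain:
  fixes T :: "'a::banach \<Rightarrow>\<^sub>L 'b::real_normed_vector"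
  assumes nT: "norm T = 1"
    and cl: "\<And>\<epsilon>. \<epsilon> > 0 \<Longrightarrow> \<exists>\<delta>>0. \<exists>u0. norm u0 = 1 \<and> (\<forall>x. norm x = 1 \<and> norm (blinfun_apply T x) > 1 - \<delta>
            \<longrightarrow> norm (x - u0) < \<epsilon> \<or> norm (x + u0) < \<epsilon>)"
  shows "\<exists>x0. norm x0 = 1 \<and> norm (blinfun_apply T x0) = 1"
proof -
  have "\<forall>n. \<exists>x. norm x = 1 \<and> norm (blinfun_apply T x) > 1 - 1 / real (Suc n)"
    using nearnorm[OF nT] by simp
  then obtain y where y: "\<And>n. norm (y n) = 1" "\<And>n. norm (blinfun_apply T (y n)) > 1 - 1 / real (Suc n)"
    by metis
  define S where "S = closure (range y)"
  have cov: "\<exists>k. finite k \<and> S \<subseteq> (\<Union>x\<in>k. ball x e)" if e: "e > 0" for e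
  proof -
    obtain \<delta> u0 where d: "\<delta> > 0" and u0: "\<And>x. norm x = 1 \<and> norm (blinfun_apply T x) > 1 - \<delta>
            \<Longrightarrow> norm (x - u0) < e/2 \<or> norm (x + u0) < e/2"
      using cl[of "e/2"] e by auto
    obtain N where N: "1 / real (Suc N) < \<delta>" using nat_approx_posE[OF d] by blast
    define k where "k = {u0, -u0} \<union> y ` {..<N}"
    have fk: "finite k" unfolding k_def by simp
    have "range y \<subseteq> (\<Union>x\<in>k. cball x (e/2))"
    proof
      fix z assume "z \<in> range y"
      then obtain n where zn: "z = y n" by blast
      show "z \<in> (\<Union>x\<in>k. cball x (e/2))"
      proof (cases "n < N")
        case True
        hence "y n \<in> k" unfolding k_def by blast
        thus ?thesis using zn e by force
      next
        case False
        hence "1 / real (Suc n) \<le> 1 / real (Suc N)" by (simp add: frac_le)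
        hence "norm (blinfun_apply T (y n)) > 1 - \<delta>" using y(2)[of n] N by linarith
        hence "norm (y n - u0) < e/2 \<or> norm (y n + u0) < e/2" using u0 y(1) by blast
        moreover have "dist u0 (y n) = norm (y n - u0)" by (simp add: dist_norm norm_minus_commute)
        moreover have "dist (-u0) (y n) = norm (y n + u0)"
        proof -
          have "-u0 - y n = -(y n + u0)" by simp
          thus ?thesis by (metis dist_norm norm_minus_cancel)
        qed
        ultimately have "dist u0 (y n) \<le> e/2 \<or> dist (-u0) (y n) \<le> e/2" by auto
        moreover have "u0 \<in> k" "-u0 \<in> k" unfolding k_def by auto
        ultimately show ?thesis using zn by auto
      qed
    qed
    hence "S \<subseteq> (\<Union>x\<in>k. cball x (e/2))" unfolding S_def
      by (intro closure_minimal) (auto intro!: closed_UN fk)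
    also have "\<dots> \<subseteq> (\<Union>x\<in>k. ball x e)" using e by auto
    finally show ?thesis using fk by blast
  qed
  have "compact S" unfolding compact_eq_totally_bounded
    using cov complete_eq_closed[of S] unfolding S_def by auto
  hence "seq_compact S" by (rule compact_imp_seq_compact)
  moreover have "\<forall>n. y n \<in> S" unfolding S_def by (intro allI closure_subset[THEN subsetD] rangeI)
  ultimately obtain l r where l: "strict_mono r" "(y \<circ> r) \<longlonglongrightarrow> l"
    by (rule seq_compactE)
  have "(\<lambda>n. norm ((y \<circ> r) n)) \<longlonglongrightarrow> norm l" using l(2) by (rule tendsto_norm)
  moreover have "(\<lambda>n. norm ((y \<circ> r) n)) = (\<lambda>n. 1)" using y(1) by auto
  ultimately have "(\<lambda>n. 1::real) \<longlonglongrightarrow> norm l" by simp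
  hence "1 = norm l" by (rule LIMSEQ_unique[OF tendsto_const])
  hence nl: "norm l = 1" by simp
  have TT: "(\<lambda>n. norm (blinfun_apply T ((y \<circ> r) n))) \<longlonglongrightarrow> norm (blinfun_apply T l)"
    by (intro tendsto_norm bounded_linear.tendsto[OF blinfun.bounded_linear_right] l(2))
  have up: "norm (blinfun_apply T l) \<le> 1" using norm_blinfun[of T l] nT nl by simp
  have lo: "1 - 1 / real (Suc m) \<le> norm (blinfun_apply T l)" for m
  proof (rule LIMSEQ_le_const[OF TT], intro exI allI impI)
    fix n assume "m \<le> n"
    hence "m \<le> r n" using seq_suble[OF l(1), of n] by linarith
    hence "1 / real (Suc (r n)) \<le> 1 / real (Suc m)" by (simp add: frac_le)
    thus "1 - 1 / real (Suc m) \<le> norm (blinfun_apply T ((y \<circ> r) n))" using y(2)[of "r n"] by simp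
  qed
  have "norm (blinfun_apply T l) \<ge> 1"
  proof (rule ccontr)
    assume "\<not> ?thesis"
    hence "1 - norm (blinfun_apply T l) > 0" by simp
    then obtain m where "1 / real (Suc m) < 1 - norm (blinfun_apply T l)" by (rule nat_approx_posE)
    thus False using lo[of m] by linarith
  qed
  thus ?thesis using up nl by (intro exI[of _ l]) simp
qed



lemma cluster0:
  fixes T :: "'a::real_normed_vector \<Rightarrow>\<^sub>L 'b::real_normed_vector"
  assumes cl: "\<And>\<epsilon>. \<epsilon> > 0 \<Longrightarrow> \<exists>\<delta>>0. \<exists>u0. norm u0 = 1 \<and> (\<forall>x. norm x = 1 \<and> norm (blinfun_apply T x) > 1 - \<delta>
            \<longrightarrow> norm (x - u0) < \<epsilon> \<or> norm (x + u0) < \<epsilon>)"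
    and x0: "norm x0 = 1" "norm (blinfun_apply T x0) = 1" and eta: "\<eta> > 0"
  shows "\<exists>\<delta>>0. \<forall>x. norm x = 1 \<and> norm (blinfun_apply T x) > 1 - \<delta>
            \<longrightarrow> norm (x - x0) < \<eta> \<or> norm (x + x0) < \<eta>"
proof -
  obtain \<delta> u0 where d: "\<delta> > 0" and u0: "\<And>x. norm x = 1 \<and> norm (blinfun_apply T x) > 1 - \<delta>
            \<Longrightarrow> norm (x - u0) < \<eta>/2 \<or> norm (x + u0) < \<eta>/2"
    using cl[of "\<eta>/2"] eta by auto
  have hx0: "norm (x0 - u0) < \<eta>/2 \<or> norm (x0 + u0) < \<eta>/2" using u0 x0 d by simp
  have "norm (x - x0) < \<eta> \<or> norm (x + x0) < \<eta>"
    if x: "norm x = 1" "norm (blinfun_apply T x) > 1 - \<delta>" for x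
  proof -
    have hx: "norm (x - u0) < \<eta>/2 \<or> norm (x + u0) < \<eta>/2" using u0 x by blast
    have e1: "x - x0 = (x - u0) - (x0 - u0)" by simp
    have e2: "x - x0 = (x + u0) - (x0 + u0)" by simp
    have e3: "x + x0 = (x - u0) + (x0 + u0)" by simp
    have e4: "x + x0 = (x + u0) + (x0 - u0)" by simp
    from hx hx0 show ?thesis
      using tri4[of "x - u0" "x0 - u0"] tri4[of "x + u0" "x0 + u0"]
        tri4[of "x - u0" "x0 + u0"] tri4[of "x + u0" "x0 - u0"]
      unfolding e1[symmetric] e2[symmetric] e3[symmetric] e4[symmetric] by linarith
  qed
  thus ?thesis using d by blast
qed

lemma upper:
  fixes T S :: "'a::real_normed_vector \<Rightarrow>\<^sub>L 'b::real_normed_vector" and \<psi> :: "'b \<Rightarrow>\<^sub>L real"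
  assumes nT: "norm T = 1" and x0: "norm x0 = 1" and Tx0: "norm (blinfun_apply T x0) = 1"
    and cl0: "\<And>\<eta>. \<eta> > 0 \<Longrightarrow> \<exists>\<delta>>0. \<forall>x. norm x = 1 \<and> norm (blinfun_apply T x) > 1 - \<delta>
            \<longrightarrow> norm (x - x0) < \<eta> \<or> norm (x + x0) < \<eta>"
    and sm: "smooth_point (blinfun_apply T x0)" and p1: "norm \<psi> = 1"
    and py: "blinfun_apply \<psi> (blinfun_apply T x0) = 1" and eta: "\<eta> > 0"
  shows "\<exists>t0>0. \<forall>t. 0 < t \<and> t < t0 \<longrightarrow> norm (T + t *\<^sub>R S) \<le> 1 + t * (blinfun_apply \<psi> (blinfun_apply S x0) + \<eta>)"
proof -
  define y0 where "y0 = blinfun_apply T x0"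
  define w where "w = blinfun_apply S x0"
  define M where "M = norm S"
  define a where "a = blinfun_apply \<psi> w"
  have M0: "M \<ge> 0" unfolding M_def by simp
  have nw: "norm w \<le> M" unfolding w_def M_def using norm_blinfun[of S x0] x0 by simp
  have aM: "\<bar>a\<bar> \<le> M"
  proof -
    have "\<bar>a\<bar> \<le> norm \<psi> * norm w" unfolding a_def using norm_blinfun[of \<psi> w] by simp
    thus ?thesis using nw p1 by simp
  qed
  have "\<eta>/4 > 0" using eta by simp
  from smooth_gateaux[OF sm[folded y0_def] Tx0[folded y0_def] p1 py[folded y0_def] this, of w]
  obtain s where s: "s > 0" "norm (y0 + s *\<^sub>R w) \<le> 1 + s * (a + \<eta>/4)"
    unfolding a_def by blast
  define \<rho> where "\<rho> = min (s * \<eta> / 4) (\<eta> / (4 * (M + 1)))"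
  have rho: "\<rho> > 0" unfolding \<rho>_def using s eta M0 by simp
  have rs: "\<rho> / s \<le> \<eta>/4" using s unfolding \<rho>_def by (simp add: field_simps)
  have rM: "M * \<rho> \<le> \<eta>/4"
  proof -
    have "M * \<rho> \<le> M * (\<eta> / (4 * (M + 1)))" unfolding \<rho>_def using M0 by (intro mult_left_mono) auto
    also have "\<dots> \<le> (M+1) * (\<eta> / (4 * (M + 1)))" using eta M0 by (intro mult_right_mono) auto
    also have "\<dots> = \<eta>/4" using M0 by (simp add: field_simps)
    finally show ?thesis .
  qed
  obtain \<delta> where d: "\<delta> > 0" and dx: "\<And>x. norm x = 1 \<and> norm (blinfun_apply T x) > 1 - \<delta>
            \<Longrightarrow> norm (x - x0) < \<rho> \<or> norm (x + x0) < \<rho>"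
    using cl0[OF rho] by blast
  define \<delta>' where "\<delta>' = min \<delta> 1"
  have d': "\<delta>' > 0" "\<delta>' \<le> \<delta>" "\<delta>' \<le> 1" unfolding \<delta>'_def using d by auto
  define t0 where "t0 = min s (\<delta>' / (2 * M + 1))"
  have t0: "t0 > 0" unfolding t0_def using s d' M0 by simp
  have main: "norm (T + t *\<^sub>R S) \<le> 1 + t * (a + \<eta>)" if t: "0 < t" "t < t0" for t
  proof -
    have ts: "t \<le> s" using t unfolding t0_def by simp
    have td: "t * (2 * M + 1) < \<delta>'"
    proof -
      have "t < \<delta>' / (2 * M + 1)" using t unfolding t0_def by simp
      thus ?thesis using M0 by (simp add: field_simps)
    qed
    have near: "norm (blinfun_apply T x' + t *\<^sub>R blinfun_apply S x') \<le> 1 + t * (a + \<eta>)"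
      if x': "norm x' = 1" "norm (x' - x0) < \<rho>" for x'
    proof -
      define z where "z = blinfun_apply T x'"
      have nz: "norm z \<le> 1" unfolding z_def using norm_blinfun[of T x'] nT x' by simp
      have zy: "norm (z - y0) < \<rho>"
      proof -
        have "z - y0 = blinfun_apply T (x' - x0)" unfolding z_def y0_def by (simp add: blinfun.diff_right)
        hence "norm (z - y0) \<le> norm (x' - x0)" using norm_blinfun[of T "x' - x0"] nT by simp
        thus ?thesis using x' by simp
      qed
      have sw: "norm (blinfun_apply S x' - w) \<le> M * \<rho>"
      proof -
        have "blinfun_apply S x' - w = blinfun_apply S (x' - x0)" unfolding w_def by (simp add: blinfun.diff_right)
        hence "norm (blinfun_apply S x' - w) \<le> M * norm (x' - x0)" using norm_blinfun[of S "x' - x0"] unfolding M_def by simp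
        also have "\<dots> \<le> M * \<rho>" using x' M0 by (intro mult_left_mono) auto
        finally show ?thesis .
      qed
      have zsw: "norm (z + s *\<^sub>R w) \<le> 1 + s * (a + \<eta>/4) + \<rho>"
      proof -
        have "z + s *\<^sub>R w = (y0 + s *\<^sub>R w) + (z - y0)" by simp
        hence "norm (z + s *\<^sub>R w) \<le> norm (y0 + s *\<^sub>R w) + norm (z - y0)" by (simp only: norm_triangle_ineq)
        thus ?thesis using s zy by linarith
      qed
      have eqz: "z + t *\<^sub>R w = (1 - t/s) *\<^sub>R z + (t/s) *\<^sub>R (z + s *\<^sub>R w)"
        using s by (simp add: algebra_simps)
      have "norm (z + t *\<^sub>R w) \<le> norm ((1 - t/s) *\<^sub>R z) + norm ((t/s) *\<^sub>R (z + s *\<^sub>R w))"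
        unfolding eqz by (rule norm_triangle_ineq)
      also have "\<dots> = (1 - t/s) * norm z + (t/s) * norm (z + s *\<^sub>R w)"
        using s t ts by (simp add: abs_of_nonneg)
      also have "\<dots> \<le> (1 - t/s) * 1 + (t/s) * (1 + s * (a + \<eta>/4) + \<rho>)"
        using s t ts nz zsw by (intro add_mono mult_left_mono) auto
      also have "\<dots> = 1 + t * (a + \<eta>/4) + t * (\<rho> / s)" using s by (simp add: field_simps)
      also have "\<dots> \<le> 1 + t * (a + \<eta>/4) + t * (\<eta>/4)" using rs t by (intro add_left_mono mult_left_mono) auto
      finally have zt: "norm (z + t *\<^sub>R w) \<le> 1 + t * (a + \<eta>/2)" by (simp add: algebra_simps)
      have "z + t *\<^sub>R blinfun_apply S x' = (z + t *\<^sub>R w) + t *\<^sub>R (blinfun_apply S x' - w)"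
        by (simp add: algebra_simps)
      hence tr1: "norm (z + t *\<^sub>R blinfun_apply S x') \<le> norm (z + t *\<^sub>R w) + norm (t *\<^sub>R (blinfun_apply S x' - w))"
        by (simp only: norm_triangle_ineq)
      have "norm (t *\<^sub>R (blinfun_apply S x' - w)) = t * norm (blinfun_apply S x' - w)"
        using t by simp
      hence "norm (z + t *\<^sub>R blinfun_apply S x') \<le> norm (z + t *\<^sub>R w) + t * norm (blinfun_apply S x' - w)"
        using tr1 by linarith
      also have "\<dots> \<le> 1 + t * (a + \<eta>/2) + t * (\<eta>/4)"
        using zt sw rM t by (intro add_mono mult_left_mono) auto
      also have "\<dots> \<le> 1 + t * (a + \<eta>)" using t eta by (simp add: algebra_simps)
      finally show ?thesis unfolding z_def .
    qed
    have tMa: "- (t * M) \<le> t * a"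
    proof -
      have "-M \<le> a" using aM by linarith
      hence "t * (-M) \<le> t * a" using t by (intro mult_left_mono) auto
      thus ?thesis by simp
    qed
    have B0: "0 \<le> 1 + t * (a + \<eta>)"
    proof -
      have "t * M \<le> t * (2 * M + 1)" using t M0 by (intro mult_left_mono) auto
      hence "t * M < 1" using td d' by linarith
      moreover have "- (t * M) \<le> t * a" using tMa .
      moreover have "0 \<le> t * \<eta>" using t eta by simp
      moreover have "t * (a + \<eta>) = t * a + t * \<eta>" by (simp add: algebra_simps)
      ultimately show ?thesis by linarith
    qed
    show ?thesis
    proof (rule unit_bound[OF _ B0])
      fix x :: 'a assume x: "norm x = 1"
      have app: "blinfun_apply (T + t *\<^sub>R S) x = blinfun_apply T x + t *\<^sub>R blinfun_apply S x"
        by (simp add: blinfun.add_left blinfun.scaleR_left)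
      show "norm (blinfun_apply (T + t *\<^sub>R S) x) \<le> 1 + t * (a + \<eta>)"
      proof (cases "norm (blinfun_apply T x) > 1 - \<delta>'")
        case True
        hence "norm (blinfun_apply T x) > 1 - \<delta>" using d' by linarith
        hence "norm (x - x0) < \<rho> \<or> norm (x + x0) < \<rho>" using dx x by blast
        thus ?thesis
        proof
          assume "norm (x - x0) < \<rho>" thus ?thesis using near[OF x] app by simp
        next
          assume h: "norm (x + x0) < \<rho>"
          have "-x - x0 = -(x + x0)" by simp
          hence "norm (-x - x0) = norm (x + x0)" by (simp only: norm_minus_cancel)
          hence "norm (-x - x0) < \<rho>" using h by simp
          hence "norm (blinfun_apply T (-x) + t *\<^sub>R blinfun_apply S (-x)) \<le> 1 + t * (a + \<eta>)"
            using near x by simp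
          moreover have "blinfun_apply T (-x) + t *\<^sub>R blinfun_apply S (-x) = - (blinfun_apply T x + t *\<^sub>R blinfun_apply S x)"
            by (simp add: blinfun.minus_right)
          ultimately have "norm (- (blinfun_apply T x + t *\<^sub>R blinfun_apply S x)) \<le> 1 + t * (a + \<eta>)"
            by simp
          thus ?thesis unfolding app norm_minus_cancel .
        qed
      next
        case False
        have Sx: "norm (blinfun_apply S x) \<le> M" using norm_blinfun[of S x] x unfolding M_def by simp
        have "norm (blinfun_apply T x + t *\<^sub>R blinfun_apply S x) \<le> norm (blinfun_apply T x) + norm (t *\<^sub>R blinfun_apply S x)"
          by (rule norm_triangle_ineq)
        also have "\<dots> = norm (blinfun_apply T x) + t * norm (blinfun_apply S x)" using t by simp
        also have "\<dots> \<le> (1 - \<delta>') + t * M" using False Sx t by (intro add_mono mult_left_mono) auto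
        also have "\<dots> \<le> 1 + t * (a + \<eta>)"
        proof -
          have "- (t * M) \<le> t * a" using tMa .
          moreover have "t * M * 2 \<le> t * (2 * M + 1)" using t M0 by (simp add: algebra_simps)
          moreover have "0 \<le> t * \<eta>" using t eta by simp
          moreover have "t * (a + \<eta>) = t * a + t * \<eta>" by (simp add: algebra_simps)
          ultimately show ?thesis using td by linarith
        qed
        finally show ?thesis using app by simp
      qed
    qed
  qed
  show ?thesis using t0 main unfolding a_def w_def by blast
qed



theorem proposition2p7:
  fixes T :: "'a::banach \<Rightarrow>\<^sub>L 'b::banach"
  assumes "reflexive_space TYPE('a)" and "smooth_space TYPE('b)"
    and "dim_gt_one TYPE('a)" and "dim_gt_one TYPE('b)"
    and "T \<in> compact_ops" and "norm T = 1"
    and "\<forall>\<epsilon>>0. \<exists>A \<in> compact_ops. A \<noteq> T \<and> uniform_BPB_approx T \<epsilon> A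
                      \<and> smooth_point_on compact_ops A"
  shows "smooth_point_on compact_ops T"
proof -
  note Ysm = assms(2) and TK = assms(5) and nT = assms(6) and H = assms(7)
  have cl: "\<And>\<epsilon>. \<epsilon> > 0 \<Longrightarrow> \<exists>\<delta>>0. \<exists>u0. norm u0 = 1 \<and> (\<forall>x. norm x = 1 \<and> norm (blinfun_apply T x) > 1 - \<delta>
            \<longrightarrow> norm (x - u0) < \<epsilon> \<or> norm (x + u0) < \<epsilon>)"
    by (rule cluster[OF Ysm nT H])
  obtain x0 where x0: "norm x0 = 1" "norm (blinfun_apply T x0) = 1" using attain[OF nT cl] by blast
  have cl0: "\<And>\<eta>. \<eta> > 0 \<Longrightarrow> \<exists>\<delta>>0. \<forall>x. norm x = 1 \<and> norm (blinfun_apply T x) > 1 - \<delta>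
            \<longrightarrow> norm (x - x0) < \<eta> \<or> norm (x + x0) < \<eta>"
    by (rule cluster0[OF cl x0])
  have y0: "blinfun_apply T x0 \<noteq> 0" using x0 by auto
  hence sm: "smooth_point (blinfun_apply T x0)" using Ysm unfolding smooth_space_def by blast
  then obtain \<psi> :: "'b \<Rightarrow>\<^sub>L real" where p1: "norm \<psi> = 1" and py: "blinfun_apply \<psi> (blinfun_apply T x0) = 1"
    using x0 unfolding smooth_point_def by auto
  define f where "f S = blinfun_apply \<psi> (blinfun_apply S x0)" for S :: "'a \<Rightarrow>\<^sub>L 'b"
  have fbl: "bounded_linear_on compact_ops f" and fdn: "dual_norm_on compact_ops f = 1"
    unfolding f_def using fun_on_K[OF p1 x0(1) TK nT py] by auto
  have fT: "f T = norm T" unfolding f_def using py nT by simp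
  have uniq: "\<forall>a\<in>compact_ops. g a = f a"
    if g: "bounded_linear_on compact_ops g" "dual_norm_on compact_ops g = 1" "g T = norm T" for g
  proof -
    from g(1) have gadd: "\<And>a b. a \<in> compact_ops \<Longrightarrow> b \<in> compact_ops \<Longrightarrow> g (a + b) = g a + g b"
      and gscl: "\<And>c a. a \<in> compact_ops \<Longrightarrow> g (c *\<^sub>R a) = c * g a"
      unfolding bounded_linear_on_def by blast+
    from g(1) obtain Kc where Kc: "\<And>a. a \<in> compact_ops \<Longrightarrow> \<bar>g a\<bar> \<le> Kc * norm a"
      unfolding bounded_linear_on_def by blast
    define Z where "Z = {\<bar>g a\<bar> | a. a \<in> compact_ops \<and> norm a \<le> 1}"
    have bddZ: "bdd_above Z"
    proof (rule bdd_aboveI)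
      fix z assume "z \<in> Z"
      then obtain a where a: "z = \<bar>g a\<bar>" "a \<in> compact_ops" "norm a \<le> 1" unfolding Z_def by blast
      have "Kc * norm a \<le> \<bar>Kc\<bar> * norm a" by (simp add: mult_right_mono)
      also have "\<dots> \<le> \<bar>Kc\<bar> * 1" using a(3) by (intro mult_left_mono) auto
      finally show "z \<le> \<bar>Kc\<bar>" using Kc[OF a(2)] a(1) by simp
    qed
    have SupZ: "Sup Z = 1" using g(2) unfolding dual_norm_on_def Z_def .
    have gb: "\<bar>g a\<bar> \<le> norm a" if a: "a \<in> compact_ops" for a
    proof (cases "a = 0")
      case True
      have "g a = g (0 *\<^sub>R a)" using True by simp
      also have "\<dots> = 0" by (subst gscl[OF a]) simp
      finally show ?thesis by simp
    next
      case False
      define a' where "a' = (1 / norm a) *\<^sub>R a"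
      have a'K: "a' \<in> compact_ops" unfolding a'_def by (rule compact_ops_scale[OF a])
      have na': "norm a' = 1" unfolding a'_def using False by simp
      have "\<bar>g a'\<bar> \<in> Z" unfolding Z_def using a'K na' by (intro CollectI exI[of _ a']) simp
      hence "\<bar>g a'\<bar> \<le> 1" using cSup_upper[OF _ bddZ] SupZ by metis
      moreover have "g a' = (1 / norm a) * g a" unfolding a'_def using gscl[OF a] .
      ultimately have "(1 / norm a) * \<bar>g a\<bar> \<le> 1" by (simp add: abs_mult)
      thus ?thesis using False by (simp add: field_simps)
    qed
    have le: "g a \<le> f a" if a: "a \<in> compact_ops" for a
    proof (rule field_le_epsilon)
      fix \<eta> :: real assume eta: "\<eta> > 0"
      obtain t0 where t0: "t0 > 0" and tb: "\<And>t. 0 < t \<and> t < t0 \<Longrightarrow>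
          norm (T + t *\<^sub>R a) \<le> 1 + t * (blinfun_apply \<psi> (blinfun_apply a x0) + \<eta>)"
        using upper[OF nT x0 cl0 sm p1 py eta, of a] by blast
      define t where "t = t0 / 2"
      have t: "0 < t" "t < t0" unfolding t_def using t0 by auto
      have taK: "t *\<^sub>R a \<in> compact_ops" by (rule compact_ops_scale[OF a])
      have K2: "T + t *\<^sub>R a \<in> compact_ops" by (rule compact_ops_add[OF TK taK])
      have "g (T + t *\<^sub>R a) = g T + t * g a" using gadd[OF TK taK] gscl[OF a] by simp
      also have "\<dots> = 1 + t * g a" using g(3) nT by simp
      finally have "1 + t * g a \<le> norm (T + t *\<^sub>R a)" using gb[OF K2] by linarith
      also have "\<dots> \<le> 1 + t * (f a + \<eta>)" using tb[OF conjI[OF t]] unfolding f_def .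
      finally have "t * g a \<le> t * (f a + \<eta>)" by simp
      thus "g a \<le> f a + \<eta>" using t by simp
    qed
    show ?thesis
    proof
      fix a :: "'a \<Rightarrow>\<^sub>L 'b" assume a: "a \<in> compact_ops"
      have na: "(-1) *\<^sub>R a \<in> compact_ops" by (rule compact_ops_scale[OF a])
      have "g ((-1) *\<^sub>R a) \<le> f ((-1) *\<^sub>R a)" by (rule le[OF na])
      moreover have "g ((-1) *\<^sub>R a) = - g a" by (subst gscl[OF a]) simp
      moreover have "f ((-1) *\<^sub>R a) = - f a" unfolding f_def by (simp add: blinfun.minus_left blinfun.minus_right)
      ultimately show "g a = f a" using le[OF a] by simp
    qed
  qed
  have "T \<noteq> 0" using nT by auto
  thus ?thesis unfolding smooth_point_on_def using TK fbl fdn fT uniq by blast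
qed


end
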